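(* Let $T$ be the regular rooted tree of valence $p\geq 2$ (geometric realization, usual topology), equipped with the embedded wire diffeology $\mathcal{D}_T$. Then every $g\in\operatorname{Aut}T$, viewed as a map $g:T\to T$, is smooth with respect to $\mathcal{D}_T$.
   Context: Fix a finite alphabet $A$ with $|A|=p\geq 2$. The vertices of $T$ are the finite words over $A$ (the root is the empty word); the length $|u|$ of a word is its level; two vertices are joined by an edge iff they have the form $a_1\dots a_n$ and $a_1\dots a_na_{n+1}$. As a topological space, $T$ is the 1-dimensional CW complex obtained by realizing each edge as a copy of $[0,1]$, with its usual topology. $\operatorname{Aut}T$ is the group of bijections of the vertex set fixing the root and preserving adjacency; each such automorphism is regarded as a homeomorphism of the geometric realization, mapping each edge affinely onto its image edge. A diffeology on a set $X$ is a collection of maps $U\to X$ ("plots"), $U$ ranging over open subsets of all $\mathbb{R}^n$, containing all constant maps, closed under precomposition with smooth maps, and satisfying the sheaf condition (a map that is locally a plot is a plot). The diffeology generated by a set $\mathcal{A}$ of maps is the smallest diffeology containing $\mathcal{A}$. The embedded wire diffeology $\mathcal{D}_T$ is the diffeology on $T$ generated by all maps $\gamma:\mathbb{R}\to T$ that are injective, continuous, and homeomorphisms onto their images. A map $f:X\to Y$ of diffeological spaces is smooth if $f\circ P$ is a plot of $Y$ for every plot $P$ of $X$. *)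

theory Defs
  imports "HOL-Analysis.Analysis"
begin

text \<open>Vertices are the words over the alphabet (type 'a, finite). A point of the
geometric realization is encoded as a pair (w, s): the root is ([], 0); for w a
nonempty word and 0 <= s < 1, (w, s) is the point on the edge joining w to its
parent (butlast w) at distance s from the vertex w.\<close>

definition Tcarrier :: "('a list \<times> real) set" where
  "Tcarrier = {(w, s). (w = [] \<and> s = 0) \<or> (w \<noteq> [] \<and> 0 \<le> s \<and> s < 1)}"

text \<open>Characteristic map of the closed edge with lower endpoint w (w nonempty):
parameter t in [0,1] is the distance from w; t = 1 is the parent vertex.\<close>
definition edgemap :: "'a list \<Rightarrow> real \<Rightarrow> 'a list \<times> real" where
  "edgemap w t = (if t = 1 then (butlast w, 0) else (w, t))"

text \<open>CW (weak) topology: U is open iff its preimage under every closed-edge map is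
open in [0,1].\<close>
definition Ttop :: "('a list \<times> real) topology" where
  "Ttop = topology (\<lambda>U. U \<subseteq> Tcarrier \<and>
      (\<forall>w. w \<noteq> [] \<longrightarrow> openin (top_of_set {0..1}) {t \<in> {0..1}. edgemap w t \<in> U}))"

lemma edge_preimage_Int:
  "{t \<in> {0..1::real}. edgemap w t \<in> S \<inter> T} = {t \<in> {0..1}. edgemap w t \<in> S} \<inter> {t \<in> {0..1}. edgemap w t \<in> T}"
  by auto

lemma edge_preimage_Union:
  "{t \<in> {0..1::real}. edgemap w t \<in> \<Union>K} = \<Union>((\<lambda>S. {t \<in> {0..1}. edgemap w t \<in> S}) ` K)"
  by auto

lemma istopology_Ttop:
  "istopology (\<lambda>U. U \<subseteq> Tcarrier \<and>
      (\<forall>w. w \<noteq> [] \<longrightarrow> openin (top_of_set {0..1}) {t \<in> {0..1}. edgemap w t \<in> U}))"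
  unfolding istopology_def edge_preimage_Int edge_preimage_Union
  by (auto intro!: openin_Int openin_Union)

definition tree_adj :: "'a list \<Rightarrow> 'a list \<Rightarrow> bool" where
  "tree_adj u v \<longleftrightarrow> (\<exists>a. v = u @ [a]) \<or> (\<exists>a. u = v @ [a])"

definition AutT :: "('a list \<Rightarrow> 'a list) set" where
  "AutT = {g. bij g \<and> g [] = [] \<and> (\<forall>u v. tree_adj u v \<longleftrightarrow> tree_adj (g u) (g v))}"

text \<open>Geometric realization of an automorphism: it maps the edge below w affinely
onto the edge below g w (levels are preserved, so orientations match).\<close>
definition realize :: "('a list \<Rightarrow> 'a list) \<Rightarrow> 'a list \<times> real \<Rightarrow> 'a list \<times> real" where
  "realize g p = (g (fst p), snd p)"

text \<open>R^n is encoded as the functions nat => real vanishing from index n on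
(with the product topology, which is the Euclidean one on this subspace).\<close>
definition Rn :: "nat \<Rightarrow> (nat \<Rightarrow> real) set" where
  "Rn n = {x. \<forall>i\<ge>n. x i = 0}"

definition open_Rn :: "nat \<Rightarrow> (nat \<Rightarrow> real) set \<Rightarrow> bool" where
  "open_Rn n U \<longleftrightarrow> openin (top_of_set (Rn n)) U"

definition partial_der :: "nat \<Rightarrow> ((nat \<Rightarrow> real) \<Rightarrow> real) \<Rightarrow> (nat \<Rightarrow> real) \<Rightarrow> real" where
  "partial_der i h x = deriv (\<lambda>t. h (x(i := x i + t))) 0"

fun Ck_on :: "nat \<Rightarrow> nat \<Rightarrow> (nat \<Rightarrow> real) set \<Rightarrow> ((nat \<Rightarrow> real) \<Rightarrow> real) \<Rightarrow> bool" where
  "Ck_on 0 n U h = continuous_on U h"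
| "Ck_on (Suc k) n U h = (continuous_on U h \<and>
     (\<forall>i<n. \<forall>x\<in>U. (\<lambda>t. h (x(i := x i + t))) differentiable (at 0)) \<and>
     (\<forall>i<n. Ck_on k n U (partial_der i h)))"

definition smooth_real :: "nat \<Rightarrow> (nat \<Rightarrow> real) set \<Rightarrow> ((nat \<Rightarrow> real) \<Rightarrow> real) \<Rightarrow> bool" where
  "smooth_real n U h \<longleftrightarrow> (\<forall>k. Ck_on k n U h)"

definition smooth_between ::
  "nat \<Rightarrow> (nat \<Rightarrow> real) set \<Rightarrow> nat \<Rightarrow> (nat \<Rightarrow> real) set \<Rightarrow> ((nat \<Rightarrow> real) \<Rightarrow> (nat \<Rightarrow> real)) \<Rightarrow> bool" where
  "smooth_between m U n V F \<longleftrightarrow> F ` U \<subseteq> V \<and> V \<subseteq> Rn n \<and> (\<forall>j<n. smooth_real m U (\<lambda>x. F x j))"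

text \<open>A parametrization is a triple (n, U, P): U open in R^n, P : U -> X.
A diffeology on the set S is a set of parametrizations.\<close>
type_synonym 'x param = "nat \<times> (nat \<Rightarrow> real) set \<times> ((nat \<Rightarrow> real) \<Rightarrow> 'x)"

definition is_diffeology :: "'x set \<Rightarrow> 'x param set \<Rightarrow> bool" where
  "is_diffeology S D \<longleftrightarrow>
     (\<forall>n U P. (n, U, P) \<in> D \<longrightarrow> open_Rn n U \<and> P ` U \<subseteq> S)
   \<and> (\<forall>n U P Q. (n, U, P) \<in> D \<and> (\<forall>x\<in>U. P x = Q x) \<longrightarrow> (n, U, Q) \<in> D)
   \<and> (\<forall>n U c. open_Rn n U \<and> c \<in> S \<longrightarrow> (n, U, \<lambda>_. c) \<in> D)
   \<and> (\<forall>n U P m V F. (n, U, P) \<in> D \<and> open_Rn m V \<and> smooth_between m V n U F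
        \<longrightarrow> (m, V, P \<circ> F) \<in> D)
   \<and> (\<forall>n U P. open_Rn n U \<and> P ` U \<subseteq> S \<and>
        (\<forall>x\<in>U. \<exists>W. open_Rn n W \<and> x \<in> W \<and> W \<subseteq> U \<and> (n, W, P) \<in> D)
        \<longrightarrow> (n, U, P) \<in> D)"

definition generated_diffeology :: "'x set \<Rightarrow> 'x param set \<Rightarrow> 'x param set" where
  "generated_diffeology S G = \<Inter>{D. is_diffeology S D \<and> G \<subseteq> D}"

definition diff_smooth :: "'x param set \<Rightarrow> 'y param set \<Rightarrow> ('x \<Rightarrow> 'y) \<Rightarrow> bool" where
  "diff_smooth DX DY f \<longleftrightarrow> (\<forall>n U P. (n, U, P) \<in> DX \<longrightarrow> (n, U, f \<circ> P) \<in> DY)"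

text \<open>Embedded wire diffeology: generated by the embeddings gamma : R -> T,
seen as 1-parameter plots on R^1.\<close>
definition wire_generators :: "('a list \<times> real) param set" where
  "wire_generators = {(1, Rn 1, \<lambda>x. \<gamma> (x 0)) | \<gamma>. embedding_map euclideanreal Ttop \<gamma>}"

definition DT :: "('a list \<times> real) param set" where
  "DT = generated_diffeology Tcarrier wire_generators"

end

theory Submission
  imports Defs
begin

lemma adj_len: "tree_adj u v \<Longrightarrow> length v = Suc (length u) \<or> length u = Suc (length v)"
  unfolding tree_adj_def by auto

lemma adj_len_eq: "tree_adj u v \<Longrightarrow> length v = Suc (length u) \<Longrightarrow> u = butlast v"
  unfolding tree_adj_def by auto

lemma adj_sym: "tree_adj u v \<Longrightarrow> tree_adj v u"
  unfolding tree_adj_def by auto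

lemma aut_len:
  assumes g: "g \<in> AutT"
  shows "length (g w) = length w"
proof (induction "length w" arbitrary: w rule: less_induct)
  case less
  show ?case
  proof (cases "w = []")
    case True then show ?thesis using g by (simp add: AutT_def)
  next
    case wne: False
  define u where "u = butlast w"
  define a where "a = last w"
  have w: "w = u @ [a]" using wne u_def a_def by simp
  have IHu: "length (g u) = length u" using less w by simp
  have adj: "tree_adj (g u) (g w)" using g w unfolding AutT_def tree_adj_def by auto
  have inj: "inj g" using g by (simp add: AutT_def bij_is_inj)
  show ?thesis
  proof (cases "u = []")
    case True
    then have "g u = []" using g by (simp add: AutT_def)
    then show ?thesis using adj_len[OF adj] w True by auto
  next
    case False
    define v where "v = butlast u"
    have uv: "u = v @ [last u]" using False v_def by simp
    have IHv: "length (g v) = length v" using less w uv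
      by (metis length_append_singleton lessI less_SucI)
    have adjv: "tree_adj (g v) (g u)" using g uv unfolding AutT_def tree_adj_def by auto
    have luv: "length u = Suc (length v)" using uv by (metis length_append_singleton)
    have gv: "g v = butlast (g u)" using adj_len_eq[OF adjv] IHv IHu luv by simp
    have "length (g w) \<noteq> length (g u) - 1"
    proof
      assume h: "length (g w) = length (g u) - 1"
      then have "length (g u) = Suc (length (g w))" using adj_len[OF adj] by auto
      then have "g w = butlast (g u)" using adj_len_eq[OF adj_sym[OF adj]] by simp
      with gv have "g w = g v" by simp
      then have "w = v" using inj by (simp add: inj_eq)
      moreover have "length w = Suc (length u)" using w by simp
      ultimately show False using luv by simp
    qed
    then show ?thesis using adj_len[OF adj] IHu w by auto
  qed
  qed
qed

lemma aut_butlast: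
  assumes g: "g \<in> AutT"
  shows "g (butlast w) = butlast (g w)"
proof (cases "w = []")
  case True then show ?thesis using g by (simp add: AutT_def)
next
  case False
  then have w: "w = butlast w @ [last w]" by simp
  have a0: "tree_adj (butlast w) w" unfolding tree_adj_def using w by blast
  have adj: "tree_adj (g (butlast w)) (g w)" using g a0 unfolding AutT_def by blast
  show ?thesis using adj_len_eq[OF adj] aut_len[OF g, of w] aut_len[OF g, of "butlast w"] False
    by simp
qed

lemma aut_inv: assumes g: "g \<in> AutT" shows "inv g \<in> AutT"
proof -
  have b: "bij g" and g0: "g [] = []" and a: "\<And>u v. tree_adj u v \<longleftrightarrow> tree_adj (g u) (g v)"
    using g by (auto simp: AutT_def)
  have "bij (inv g)" using b by (simp add: bij_imp_bij_inv)
  moreover have "inv g [] = []" using g0 b by (metis bij_is_inj inv_f_f)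
  moreover have "tree_adj u v \<longleftrightarrow> tree_adj (inv g u) (inv g v)" for u v
    using a[of "inv g u" "inv g v"] b by (simp add: bij_is_surj surj_f_inv_f)
  ultimately show ?thesis by (simp add: AutT_def)
qed

lemma openin_Ttop: "openin Ttop U \<longleftrightarrow> U \<subseteq> Tcarrier \<and>
      (\<forall>w. w \<noteq> [] \<longrightarrow> openin (top_of_set {0..1}) {t \<in> {0..1}. edgemap w t \<in> U})"
  unfolding Ttop_def topology_inverse'[OF istopology_Ttop] ..

lemma edgemap_in: "w \<noteq> [] \<Longrightarrow> t \<in> {0..1} \<Longrightarrow> edgemap w t \<in> Tcarrier"
  unfolding edgemap_def Tcarrier_def by auto

lemma topspace_Ttop: "topspace (Ttop :: ('a list \<times> real) topology) = Tcarrier"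
proof -
  have e: "{t \<in> {0..1::real}. edgemap w t \<in> Tcarrier} = {0..1}" if "w \<noteq> []" for w :: "'a list"
    using edgemap_in[OF that] by auto
  have "openin Ttop (Tcarrier :: ('a list \<times> real) set)" unfolding openin_Ttop
    using e by simp
  then have "Tcarrier \<subseteq> topspace (Ttop :: ('a list \<times> real) topology)" by (rule openin_subset)
  moreover have "topspace (Ttop :: ('a list \<times> real) topology) \<subseteq> Tcarrier"
    using openin_topspace[of "Ttop :: ('a list \<times> real) topology"] unfolding openin_Ttop by (rule conjunct1)
  ultimately show ?thesis by blast
qed

lemma realize_in: "g \<in> AutT \<Longrightarrow> p \<in> Tcarrier \<Longrightarrow> realize g p \<in> Tcarrier"
proof -
  assume g: "g \<in> AutT" and p: "p \<in> Tcarrier"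
  have e: "g w = [] \<longleftrightarrow> w = []" for w using aut_len[OF g, of w] by (metis length_0_conv)
  obtain w s where ps: "p = (w, s)" by (cases p)
  show ?thesis using p unfolding ps realize_def Tcarrier_def by (simp add: e)
qed

lemma realize_edgemap: "g \<in> AutT \<Longrightarrow> realize g (edgemap w t) = edgemap (g w) t"
  unfolding realize_def edgemap_def using aut_butlast[of g w] by auto

lemma realize_cont: fixes g :: "'a list \<Rightarrow> 'a list" assumes g: "g \<in> AutT" shows "continuous_map Ttop Ttop (realize g)"
  unfolding continuous_map topspace_Ttop
proof (intro conjI allI impI)
  show "realize g ` Tcarrier \<subseteq> Tcarrier" using realize_in[OF g] by auto
  fix U :: "('a list \<times> real) set" assume U: "openin Ttop U"
  show "openin Ttop {x \<in> Tcarrier. realize g x \<in> U}"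
    unfolding openin_Ttop
  proof (intro conjI allI impI)
    fix w :: "'a list" assume w: "w \<noteq> []"
    have gw: "g w \<noteq> []" using aut_len[OF g, of w] w by auto
    have "{t \<in> {0..1}. edgemap w t \<in> {x \<in> Tcarrier. realize g x \<in> U}}
        = {t \<in> {0..1}. edgemap (g w) t \<in> U}"
      using edgemap_in[OF w] realize_edgemap[OF g] by auto
    then show "openin (top_of_set {0..1}) {t \<in> {0..1}. edgemap w t \<in> {x \<in> Tcarrier. realize g x \<in> U}}"
      using U gw unfolding openin_Ttop by simp
  qed auto
qed

lemma realize_homeo: fixes g :: "'a list \<Rightarrow> 'a list" assumes g: "g \<in> AutT" shows "homeomorphic_map Ttop Ttop (realize g)"
proof -
  have b: "bij g" using g by (simp add: AutT_def)
  have "homeomorphic_maps Ttop Ttop (realize g) (realize (inv g))"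
    unfolding homeomorphic_maps_def using realize_cont[OF g] realize_cont[OF aut_inv[OF g]] b
    by (simp add: realize_def bij_is_inj bij_is_surj surj_f_inv_f)
  then show ?thesis using homeomorphic_map_maps by blast
qed

lemma diffeo_cong: "is_diffeology S D \<Longrightarrow> (n,U,P) \<in> D \<Longrightarrow> \<forall>x\<in>U. P x = Q x \<Longrightarrow> (n,U,Q) \<in> D"
  unfolding is_diffeology_def by blast
lemma diffeo_const: "is_diffeology S D \<Longrightarrow> open_Rn n U \<Longrightarrow> c \<in> S \<Longrightarrow> (n,U,\<lambda>_. c) \<in> D"
  unfolding is_diffeology_def by blast
lemma diffeo_comp: "is_diffeology S D \<Longrightarrow> (n,U,P) \<in> D \<Longrightarrow> open_Rn m V \<Longrightarrow> smooth_between m V n U F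
   \<Longrightarrow> (m, V, P \<circ> F) \<in> D"
  unfolding is_diffeology_def by blast
lemma diffeo_sheaf: "is_diffeology S D \<Longrightarrow> open_Rn n U \<Longrightarrow> P ` U \<subseteq> S \<Longrightarrow>
   (\<forall>x\<in>U. \<exists>W. open_Rn n W \<and> x \<in> W \<and> W \<subseteq> U \<and> (n, W, P) \<in> D) \<Longrightarrow> (n, U, P) \<in> D"
  unfolding is_diffeology_def by blast

lemma DT_mem: "x \<in> DT \<longleftrightarrow> (\<forall>D. is_diffeology Tcarrier D \<and> wire_generators \<subseteq> D \<longrightarrow> x \<in> D)"
  unfolding DT_def generated_diffeology_def by blast

theorem mainTheorem2:
  fixes g :: "'a::finite list \<Rightarrow> 'a list"
  assumes "CARD('a) \<ge> 2"
    and "g \<in> AutT"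
  shows "diff_smooth (DT :: ('a list \<times> real) param set) DT (realize g)"
proof -
  note g = assms(2)
  let ?f = "realize g"
  define D' :: "('a list \<times> real) param set" where
    "D' = {(n, U, P). open_Rn n U \<and> P ` U \<subseteq> Tcarrier \<and> (n, U, ?f \<circ> P) \<in> DT}"
  have D'_iff: "(n, U, P) \<in> D' \<longleftrightarrow> open_Rn n U \<and> P ` U \<subseteq> Tcarrier \<and> (n, U, ?f \<circ> P) \<in> DT"
    for n U P by (simp add: D'_def)
  have isD: "is_diffeology Tcarrier D'"
    unfolding is_diffeology_def
  proof (intro conjI; intro allI impI)
    fix n U P assume "(n, U, P) \<in> D'"
    then show "open_Rn n U \<and> P ` U \<subseteq> Tcarrier" unfolding D'_iff by blast
  next
    fix n U P Q assume h: "(n, U, P) \<in> D' \<and> (\<forall>x\<in>U. P x = Q x)"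
    have hP: "open_Rn n U" "P ` U \<subseteq> Tcarrier" "(n, U, ?f \<circ> P) \<in> DT" using h unfolding D'_iff by auto
    have eq: "\<forall>x\<in>U. P x = Q x" using h by blast
    have "(n, U, ?f \<circ> Q) \<in> DT" unfolding DT_mem
    proof (intro allI impI)
      fix D :: "('a list \<times> real) param set" assume D: "is_diffeology Tcarrier D \<and> wire_generators \<subseteq> D"
      have "(n, U, ?f \<circ> P) \<in> D" using hP(3) D unfolding DT_mem by blast
      moreover have "\<forall>x\<in>U. (?f \<circ> P) x = (?f \<circ> Q) x" using eq by simp
      ultimately show "(n, U, ?f \<circ> Q) \<in> D" using D diffeo_cong by blast
    qed
    moreover have "Q ` U \<subseteq> Tcarrier" using hP(2) eq by auto
    ultimately show "(n, U, Q) \<in> D'" using hP(1) unfolding D'_iff by blast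
  next
    fix n U c assume h: "open_Rn n U \<and> (c::'a list \<times> real) \<in> Tcarrier"
    have "(n, U, ?f \<circ> (\<lambda>_. c)) \<in> DT" unfolding DT_mem
    proof (intro allI impI)
      fix D :: "('a list \<times> real) param set" assume D: "is_diffeology Tcarrier D \<and> wire_generators \<subseteq> D"
      have fc: "?f c \<in> Tcarrier" using h realize_in[OF g] by blast
      have "(n, U, \<lambda>_. ?f c) \<in> D" using diffeo_const[OF conjunct1[OF D] conjunct1[OF h] fc] .
      then show "(n, U, ?f \<circ> (\<lambda>_. c)) \<in> D" by (simp add: comp_def)
    qed
    moreover have "(\<lambda>_. c) ` U \<subseteq> Tcarrier" using h by auto
    ultimately show "(n, U, \<lambda>_. c) \<in> D'" using h unfolding D'_iff by blast
  next
    fix n U P m V F assume h: "(n, U, P) \<in> D' \<and> open_Rn m V \<and> smooth_between m V n U F"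
    have hP: "open_Rn n U" "P ` U \<subseteq> Tcarrier" "(n, U, ?f \<circ> P) \<in> DT" using h unfolding D'_iff by auto
    have "(m, V, ?f \<circ> (P \<circ> F)) \<in> DT" unfolding DT_mem
    proof (intro allI impI)
      fix D :: "('a list \<times> real) param set" assume D: "is_diffeology Tcarrier D \<and> wire_generators \<subseteq> D"
      have "(n, U, ?f \<circ> P) \<in> D" using hP(3) D unfolding DT_mem by blast
      then have "(m, V, (?f \<circ> P) \<circ> F) \<in> D" using D h diffeo_comp by blast
      then show "(m, V, ?f \<circ> (P \<circ> F)) \<in> D" by (simp add: comp_assoc)
    qed
    moreover have "F ` V \<subseteq> U" using h by (simp add: smooth_between_def)
    then have "(P \<circ> F) ` V \<subseteq> Tcarrier" using hP(2) by (auto simp: image_comp[symmetric])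
    ultimately show "(m, V, P \<circ> F) \<in> D'" using h unfolding D'_iff by blast
  next
    fix n U P assume h: "open_Rn n U \<and> P ` U \<subseteq> Tcarrier \<and>
        (\<forall>x\<in>U. \<exists>W. open_Rn n W \<and> x \<in> W \<and> W \<subseteq> U \<and> (n, W, P) \<in> D')"
    have "(n, U, ?f \<circ> P) \<in> DT" unfolding DT_mem
    proof (intro allI impI)
      fix D :: "('a list \<times> real) param set" assume D: "is_diffeology Tcarrier D \<and> wire_generators \<subseteq> D"
      have loc: "\<forall>x\<in>U. \<exists>W. open_Rn n W \<and> x \<in> W \<and> W \<subseteq> U \<and> (n, W, ?f \<circ> P) \<in> D"
      proof
        fix x assume "x \<in> U"
        moreover have "\<forall>x\<in>U. \<exists>W. open_Rn n W \<and> x \<in> W \<and> W \<subseteq> U \<and> (n, W, P) \<in> D'"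
          by (rule conjunct2[OF conjunct2[OF h]])
        ultimately obtain W where W: "open_Rn n W" "x \<in> W" "W \<subseteq> U" "(n, W, P) \<in> D'" by blast
        then have "(n, W, ?f \<circ> P) \<in> DT" unfolding D'_iff by blast
        then have "(n, W, ?f \<circ> P) \<in> D" using D unfolding DT_mem by blast
        then show "\<exists>W. open_Rn n W \<and> x \<in> W \<and> W \<subseteq> U \<and> (n, W, ?f \<circ> P) \<in> D" using W by blast
      qed
      have "(?f \<circ> P) ` U \<subseteq> Tcarrier"
      proof
        fix y assume "y \<in> (?f \<circ> P) ` U"
        then obtain x where "x \<in> U" "y = ?f (P x)" by auto
        moreover have "P x \<in> Tcarrier" using h \<open>x \<in> U\<close> by blast
        ultimately show "y \<in> Tcarrier" using realize_in[OF g] by simp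
      qed
      moreover have "open_Rn n U" using h by (rule conjunct1)
      ultimately show "(n, U, ?f \<circ> P) \<in> D" using diffeo_sheaf[OF conjunct1[OF D], of n U] loc by blast
    qed
    then show "(n, U, P) \<in> D'" using h unfolding D'_iff by blast
  qed
  have gen: "wire_generators \<subseteq> D'"
  proof
    fix x assume "x \<in> (wire_generators :: ('a list \<times> real) param set)"
    then obtain \<gamma> where x: "x = (1, Rn 1, \<lambda>x. \<gamma> (x 0))"
      and e: "embedding_map euclideanreal Ttop \<gamma>" unfolding wire_generators_def by blast
    have hm: "homeomorphic_map Ttop Ttop ?f" by (rule realize_homeo[OF g])
    have em: "embedding_map Ttop Ttop ?f"
      using hm unfolding surjective_embedding_map[symmetric] by (rule conjunct1)
    have e2: "embedding_map euclideanreal Ttop (?f \<circ> \<gamma>)" by (rule embedding_map_compose[OF e em])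
    have cm: "continuous_map euclideanreal (subtopology Ttop (\<gamma> ` topspace euclideanreal)) \<gamma>"
      using e unfolding embedding_map_def by (rule homeomorphic_imp_continuous_map)
    have "\<gamma> ` topspace euclideanreal \<subseteq> topspace (subtopology Ttop (\<gamma> ` topspace euclideanreal))"
      by (rule continuous_map_image_subset_topspace[OF cm])
    then have "\<gamma> ` UNIV \<subseteq> (Tcarrier :: ('a list \<times> real) set)"
      by (simp add: topspace_Ttop)
    then have img: "\<gamma> t \<in> Tcarrier" for t by blast
    have "(1, Rn 1, \<lambda>x. (?f \<circ> \<gamma>) (x 0)) \<in> (wire_generators :: ('a list \<times> real) param set)"
      unfolding wire_generators_def using e2 by blast
    then have "(1, Rn 1, \<lambda>x. (?f \<circ> \<gamma>) (x 0)) \<in> DT"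
      unfolding DT_mem by blast
    then have "(1, Rn 1, ?f \<circ> (\<lambda>x. \<gamma> (x 0))) \<in> DT" by (simp add: comp_def)
    moreover have "open_Rn 1 (Rn 1)" by (simp add: open_Rn_def)
    moreover have "(\<lambda>x. \<gamma> (x 0)) ` Rn 1 \<subseteq> Tcarrier" using img by auto
    ultimately show "x \<in> D'" unfolding x D'_iff by blast
  qed
  have "DT \<subseteq> D'"
  proof
    fix x assume "x \<in> (DT :: ('a list \<times> real) param set)"
    then show "x \<in> D'" unfolding DT_mem using isD gen by blast
  qed
  show ?thesis unfolding diff_smooth_def
  proof (intro allI impI)
    fix n U P assume "(n, U, P) \<in> (DT :: ('a list \<times> real) param set)"
    then have "(n, U, P) \<in> D'" using \<open>DT \<subseteq> D'\<close> by blast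
    then show "(n, U, ?f \<circ> P) \<in> DT" unfolding D'_iff by blast
  qed
qed

end
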